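(* Let $G$ be a finite graph, $k$ a positive integer, $uv\in E(G)$, and $c$ a $k$-colouring of $G$ such that some colour $i\in\{1,\dots,k\}$ does not appear under $c$ on the closed neighbourhood of $u$ nor on the closed neighbourhood of $v$. Then there exist a $k$-colouring $c_u$ differing from $c$ exactly at $u$ and a $k$-colouring $c_v$ differing from $c$ exactly at $v$ such that $c_u$ and $c_v$ have no common neighbour in $\mathcal{C}_k(G)$ other than $c$.
   Context: A $k$-colouring of $G$ is a map $c:V(G)\to\{1,\dots,k\}$ with $c(x)\neq c(y)$ for every edge $xy$. The $k$-recolouring graph $\mathcal{C}_k(G)$ has as vertices all $k$-colourings of $G$, two colourings being adjacent iff they differ at exactly one vertex of $G$. *)

theory Defs
  imports Main
begin

definition graph :: "'a set \<Rightarrow> ('a \<Rightarrow> 'a \<Rightarrow> bool) \<Rightarrow> bool" where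
  "graph V E \<longleftrightarrow> finite V \<and> (\<forall>x y. E x y \<longrightarrow> x \<in> V \<and> y \<in> V)
     \<and> (\<forall>x y. E x y \<longrightarrow> E y x) \<and> (\<forall>x. \<not> E x x)"

text \<open>A k-colouring c : V -> {1..k}, proper on edges. To make colourings
  (maps defined on V) correspond one-to-one to HOL functions, we fix the
  value 0 outside V.\<close>
definition colouring :: "'a set \<Rightarrow> ('a \<Rightarrow> 'a \<Rightarrow> bool) \<Rightarrow> nat \<Rightarrow> ('a \<Rightarrow> nat) \<Rightarrow> bool" where
  "colouring V E k c \<longleftrightarrow> (\<forall>x\<in>V. c x \<in> {1..k}) \<and> (\<forall>x. x \<notin> V \<longrightarrow> c x = 0)
     \<and> (\<forall>x y. E x y \<longrightarrow> c x \<noteq> c y)"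

definition closed_nbhd :: "('a \<Rightarrow> 'a \<Rightarrow> bool) \<Rightarrow> 'a \<Rightarrow> 'a set" where
  "closed_nbhd E u = insert u {x. E u x}"

definition recol_adj :: "'a set \<Rightarrow> ('a \<Rightarrow> 'a \<Rightarrow> bool) \<Rightarrow> nat \<Rightarrow> ('a \<Rightarrow> nat) \<Rightarrow> ('a \<Rightarrow> nat) \<Rightarrow> bool" where
  "recol_adj V E k c d \<longleftrightarrow> colouring V E k c \<and> colouring V E k d
     \<and> (\<exists>x. {y. c y \<noteq> d y} = {x})"

end

theory Submission
  imports Defs
begin

theorem lemma2p3:
  fixes V :: "'a set" and E :: "'a \<Rightarrow> 'a \<Rightarrow> bool" and k :: nat
    and u v :: 'a and c :: "'a \<Rightarrow> nat" and i :: nat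
  assumes "graph V E"
    and "k > 0"
    and "E u v"
    and "colouring V E k c"
    and "i \<in> {1..k}"
    and "i \<notin> c ` closed_nbhd E u"
    and "i \<notin> c ` closed_nbhd E v"
  shows "\<exists>cu cv. colouring V E k cu \<and> {x. cu x \<noteq> c x} = {u}
             \<and> colouring V E k cv \<and> {x. cv x \<noteq> c x} = {v}
             \<and> (\<forall>d. recol_adj V E k cu d \<and> recol_adj V E k cv d \<longrightarrow> d = c)"
proof -
  have G: "\<forall>x y. E x y \<longrightarrow> x \<in> V \<and> y \<in> V" "\<forall>x y. E x y \<longrightarrow> E y x" "\<forall>x. \<not> E x x"
    using assms(1) unfolding graph_def by auto
  have uv: "u \<noteq> v" "u \<in> V" "v \<in> V" using G assms(3) by blast+
  have ciu: "c u \<noteq> i" and civ: "c v \<noteq> i" using assms(6,7) unfolding closed_nbhd_def by auto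
  have nu: "\<And>y. E u y \<Longrightarrow> c y \<noteq> i" using assms(6) unfolding closed_nbhd_def by auto
  have nv: "\<And>y. E v y \<Longrightarrow> c y \<noteq> i" using assms(7) unfolding closed_nbhd_def by auto
  have C: "\<forall>x\<in>V. c x \<in> {1..k}" "\<forall>x. x \<notin> V \<longrightarrow> c x = 0" "\<forall>x y. E x y \<longrightarrow> c x \<noteq> c y"
    using assms(4) unfolding colouring_def by auto
  define cu where "cu = c(u := i)"
  define cv where "cv = c(v := i)"
  have cuc: "colouring V E k cu"
    unfolding colouring_def cu_def
  proof (intro conjI allI impI ballI)
    fix x y assume "E x y"
    then show "(c(u := i)) x \<noteq> (c(u := i)) y"
    proof -
      have "c x \<noteq> c y" using C(3) \<open>E x y\<close> by blast
      moreover have "x = u \<Longrightarrow> y \<noteq> u \<and> c y \<noteq> i" using nu G(3) \<open>E x y\<close> by blast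
      moreover have "y = u \<Longrightarrow> x \<noteq> u \<and> c x \<noteq> i" using nu G(2,3) \<open>E x y\<close> by blast
      ultimately show ?thesis by auto
    qed
  qed (use C uv assms(5) in auto)
  have cvc: "colouring V E k cv"
    unfolding colouring_def cv_def
  proof (intro conjI allI impI ballI)
    fix x y assume "E x y"
    then show "(c(v := i)) x \<noteq> (c(v := i)) y"
    proof -
      have "c x \<noteq> c y" using C(3) \<open>E x y\<close> by blast
      moreover have "x = v \<Longrightarrow> y \<noteq> v \<and> c y \<noteq> i" using nv G(3) \<open>E x y\<close> by blast
      moreover have "y = v \<Longrightarrow> x \<noteq> v \<and> c x \<noteq> i" using nv G(2,3) \<open>E x y\<close> by blast
      ultimately show ?thesis by auto
    qed
  qed (use C uv assms(5) in auto)
  have du: "{x. cu x \<noteq> c x} = {u}" unfolding cu_def using ciu by auto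
  have dv: "{x. cv x \<noteq> c x} = {v}" unfolding cv_def using civ by auto
  have main: "d = c" if a: "recol_adj V E k cu d" "recol_adj V E k cv d" for d
  proof -
    obtain x where x: "{y. cu y \<noteq> d y} = {x}" using a(1) unfolding recol_adj_def by blast
    obtain z where z: "{y. cv y \<noteq> d y} = {z}" using a(2) unfolding recol_adj_def by blast
    have dcol: "\<forall>x y. E x y \<longrightarrow> d x \<noteq> d y" using a(1) unfolding recol_adj_def colouring_def by blast
    have ex: "\<And>y. y \<noteq> x \<Longrightarrow> d y = cu y"
    proof -
      fix y assume "y \<noteq> x"
      then have "y \<notin> {y. cu y \<noteq> d y}" using x by simp
      then show "d y = cu y" by simp
    qed
    have inz: "\<And>y. cv y \<noteq> d y \<Longrightarrow> y = z"
    proof -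
      fix y assume "cv y \<noteq> d y"
      then have "y \<in> {y. cv y \<noteq> d y}" by simp
      then show "y = z" using z by simp
    qed
    have ez: "\<And>y. y \<noteq> z \<Longrightarrow> d y = cv y" using inz by metis
    have cuu: "cu u = i" "cu v = c v" "cv v = i" "cv u = c u" using uv unfolding cu_def cv_def by auto
    have "x = u \<or> x = v"
    proof (rule ccontr)
      assume "\<not> (x = u \<or> x = v)"
      then have "d u = i" "d v = c v" using ex cuu by auto
      then have "u = z" "v = z" using inz ciu civ cuu by auto
      then show False using uv by simp
    qed
    then show ?thesis
    proof
      assume "x = u"
      then have "d v = c v" using ex uv cuu by auto
      then have "z = v" using inz[of v] civ cuu by metis
      then have "d u = c u" using ez uv cuu by auto
      show ?thesis
      proof
        fix y show "d y = c y"
        proof (cases "y = u")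
          case True then show ?thesis using \<open>d u = c u\<close> by simp
        next
          case False then show ?thesis using ex \<open>x = u\<close> unfolding cu_def by simp
        qed
      qed
    next
      assume "x = v"
      then have "d u = i" using ex uv cuu by auto
      then have "z = u" using inz[of u] ciu cuu by metis
      then have "d v = i" using ez uv cuu by auto
      then show ?thesis using dcol assms(3) \<open>d u = i\<close> by auto
    qed
  qed
  show ?thesis using cuc cvc du dv main by blast
qed

end
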